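(* Let $m\in\mathbb N$ and let $\mathcal P_m$ be the $1$-dimensional PVAS (transitions and steps only; initial configuration irrelevant) with states $\{\perp,0,1,\dots,m\}$, stack alphabet $\{\gamma_0,\dots,\gamma_m\}$, and transitions: $(\perp,0,\mathrm{pop}(\gamma_0),0)$, $(0,+1,\mathrm{nop},\perp)$, and for each $i\in\{1,\dots,m\}$: $(\perp,0,\mathrm{pop}(\gamma_i),i)$, $(i,+1,\mathrm{push}(\gamma_{i-1}),\perp)$, and $(i,-1,\mathrm{push}(\gamma_{i-1}),i)$. Then for all $n\in\mathbb N$ and $j\in\{0,\dots,m\}$, $$A_j(n)=\max\{c\in\mathbb N\mid (\perp,n,\gamma_j)\xrightarrow{*}(\perp,c,\varepsilon)\},$$ and in particular this maximum exists.
   Context: Ackermann functions $A_j:\mathbb N\to\mathbb N$: $A_0(n)=n+1$ and $A_j(n)=A_{j-1}^{n+1}(1)$ for $j>0$ (the $(n+1)$-fold iterate). For a $1$-dimensional PVAS with transition set $\Delta\subseteq Q\times\mathbb Z\times\mathrm{Op}(\Gamma)\times Q$, configurations are $(q,c,w)\in Q\times\mathbb N\times\Gamma^*$, and $(p,c,u)\to(q,d,v)$ iff some $(p,a,\mathrm{op},q)\in\Delta$ has $d=c+a\ge 0$ and either $\mathrm{op}=\mathrm{push}(\gamma)$, $v=u\gamma$; or $\mathrm{op}=\mathrm{pop}(\gamma)$, $u=v\gamma$; or $\mathrm{op}=\mathrm{nop}$, $u=v$ (the top of the stack is the last letter). $\xrightarrow{*}$ is the reflexive transitive closure; $\varepsilon$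 is the empty word. *)

theory Defs
  imports Main
begin

fun ack :: "nat \<Rightarrow> nat \<Rightarrow> nat" where
  "ack 0 n = n + 1"
| "ack (Suc j) n = (ack j ^^ (n + 1)) 1"

datatype 'g op = Push 'g | Pop 'g | Nop

text \<open>Configurations are (q, c, w) with c :: nat,
  w a stack word whose top is the last letter.\<close>
type_synonym ('q, 'g) pvas = "('q \<times> int \<times> 'g op \<times> 'q) set"
type_synonym ('q, 'g) config = "'q \<times> nat \<times> 'g list"

definition pvas_step :: "('q, 'g) pvas \<Rightarrow> ('q, 'g) config \<Rightarrow> ('q, 'g) config \<Rightarrow> bool" where
  "pvas_step \<Delta> C D \<longleftrightarrow>
     (case C of (p, c, u) \<Rightarrow> case D of (q, d, v) \<Rightarrow>
       (\<exists>a opr. (p, a, opr, q) \<in> \<Delta> \<and> int d = int c + a \<and>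
          (case opr of Push \<gamma> \<Rightarrow> v = u @ [\<gamma>]
                     | Pop \<gamma> \<Rightarrow> u = v @ [\<gamma>]
                     | Nop \<Rightarrow> u = v)))"

definition pvas_reach :: "('q, 'g) pvas \<Rightarrow> ('q, 'g) config \<Rightarrow> ('q, 'g) config \<Rightarrow> bool" where
  "pvas_reach \<Delta> = (pvas_step \<Delta>)\<^sup>*\<^sup>*"

text \<open>The PVAS P_m.  States: None = bottom, Some i = state i (i \<le> m).
  Stack symbols: i represents gamma_i (i \<le> m).\<close>
definition P :: "nat \<Rightarrow> (nat option, nat) pvas" where
  "P m = {(None, 0, Pop 0, Some 0), (Some 0, 1, Nop, None)}
     \<union> (\<Union>i\<in>{1..m}. {(None, 0, Pop i, Some i),
                     (Some i, 1, Push (i - 1), None),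
                     (Some i, -1, Push (i - 1), Some i)})"

end

theory Submission
  imports Defs
begin

lemma ack_SS: "ack (Suc j) (Suc n) = ack j (ack (Suc j) n)"
  by simp

lemma ack_S0: "ack (Suc j) 0 = ack j 1"
  by simp

lemma ack_gt: "n < ack j n"
proof (induction j arbitrary: n)
  case 0 then show ?case by simp
next
  case (Suc j)
  note IHj = Suc.IH
  show ?case
  proof (induction n)
    case 0 then show ?case using IHj[of 1] by simp
  next
    case (Suc n)
    then show ?case using IHj[of "ack (Suc j) n"] by (simp only: ack_SS) linarith?
  qed
qed

lemma ack_smono: "ack j n < ack j (Suc n)"
proof (cases j)
  case 0 then show ?thesis by simp
next
  case (Suc k) then show ?thesis using ack_gt[where n="ack (Suc k) n" and j=k] by (simp only: ack_SS)
qed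

lemma ack_mono: "n \<le> n' \<Longrightarrow> ack j n \<le> ack j n'"
  using lift_Suc_mono_le[of "ack j", OF less_imp_le[OF ack_smono]] by blast

lemma ack_step_le: "ack k (Suc c) \<le> ack (Suc k) c"
proof (induction c)
  case 0 then show ?case by simp
next
  case (Suc c)
  have "Suc c < ack k (Suc c)" by (rule ack_gt)
  with Suc have "Suc (Suc c) \<le> ack (Suc k) c" by linarith
  then have "ack k (Suc (Suc c)) \<le> ack k (ack (Suc k) c)" by (rule ack_mono)
  then show ?case by (simp only: ack_SS)
qed

definition F :: "nat list \<Rightarrow> nat \<Rightarrow> nat" where
  "F w n = foldr ack w n"

lemma F_snoc: "F (w @ [j]) n = F w (ack j n)"
  by (simp add: F_def)

lemma F_mono: "n \<le> n' \<Longrightarrow> F w n \<le> F w n'"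
  by (induction w) (auto simp: F_def intro: ack_mono)

fun phi :: "(nat option, nat) config \<Rightarrow> nat" where
  "phi (None, c, w) = F w c"
| "phi (Some i, c, w) = F w (ack i c)"

lemma pot_step:
  assumes "pvas_step (P m) C D"
  shows "phi D \<le> phi C"
proof -
  obtain p c u where C: "C = (p, c, u)" by (cases C) auto
  obtain q d v where D: "D = (q, d, v)" by (cases D) auto
  from assms obtain a opr where t: "(p, a, opr, q) \<in> P m" and d: "int d = int c + a"
    and o: "(case opr of Push \<gamma> \<Rightarrow> v = u @ [\<gamma>] | Pop \<gamma> \<Rightarrow> u = v @ [\<gamma>] | Nop \<Rightarrow> u = v)"
    unfolding pvas_step_def C D by auto
  from t consider
      "p = None" "a = 0" "opr = Pop 0" "q = Some 0"
    | "p = Some 0" "a = 1" "opr = Nop" "q = None"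
    | i where "1 \<le> i" "p = None" "a = 0" "opr = Pop i" "q = Some i"
    | i where "1 \<le> i" "p = Some i" "a = 1" "opr = Push (i - 1)" "q = None"
    | i where "1 \<le> i" "p = Some i" "a = -1" "opr = Push (i - 1)" "q = Some i"
    unfolding P_def by auto
  then show ?thesis
  proof cases
    case 1 then show ?thesis using C D d o by (simp add: F_snoc)
  next
    case 2
    then have "d = Suc c" using d by simp
    then show ?thesis using C D o 2 by simp
  next
    case (3 i) then show ?thesis using C D d o by (simp add: F_snoc)
  next
    case (4 i)
    then obtain k where k: "i = Suc k" by (cases i) auto
    have "d = Suc c" using d 4 by simp
    then show ?thesis using C D o 4 k F_mono[OF ack_step_le[of k c], of u]
      by (simp add: F_snoc del: ack.simps)
  next
    case (5 i)
    then obtain k where k: "i = Suc k" by (cases i) auto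
    have "c = Suc d" using d 5 by simp
    then show ?thesis using C D o 5 k by (simp add: F_snoc ack_SS del: ack.simps)
  qed
qed

lemma pot_reach:
  assumes "pvas_reach (P m) C D"
  shows "phi D \<le> phi C"
  using assms unfolding pvas_reach_def
  by (induction rule: rtranclp_induct) (auto dest: pot_step)

lemma st_pop: "i \<le> m \<Longrightarrow> pvas_step (P m) (None, c, w@[i]) (Some i, c, w)"
  unfolding pvas_step_def P_def by (cases "i = 0") auto

lemma st_0: "pvas_step (P m) (Some 0, c, w) (None, Suc c, w)"
  unfolding pvas_step_def P_def by auto

lemma st_up: "1 \<le> i \<Longrightarrow> i \<le> m \<Longrightarrow> pvas_step (P m) (Some i, c, w) (None, Suc c, w@[i-1])"
  unfolding pvas_step_def P_def by force

lemma st_down: "1 \<le> i \<Longrightarrow> i \<le> m \<Longrightarrow> pvas_step (P m) (Some i, Suc c, w) (Some i, c, w@[i-1])"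
  unfolding pvas_step_def P_def by force

lemma reach_state: "j \<le> m \<Longrightarrow> pvas_reach (P m) (Some j, c, w) (None, ack j c, w)"
proof (induction j arbitrary: c w)
  case 0 then show ?case using st_0 unfolding pvas_reach_def by fastforce
next
  case (Suc i)
  have IHi: "pvas_reach (P m) (None, n, v @ [i]) (None, ack i n, v)" for n v
  proof -
    have "pvas_step (P m) (None, n, v@[i]) (Some i, n, v)" using Suc.prems by (intro st_pop) simp
    then show ?thesis using Suc.IH[of n v] Suc.prems unfolding pvas_reach_def
      by (simp add: converse_rtranclp_into_rtranclp)
  qed
  show ?case
  proof (induction c arbitrary: w)
    case 0
    have "pvas_step (P m) (Some (Suc i), 0, w) (None, Suc 0, w@[i])"
      using st_up[of "Suc i" m 0 w] Suc.prems by simp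
    then show ?case using IHi[of 1 w] unfolding pvas_reach_def
      by (simp add: converse_rtranclp_into_rtranclp)
  next
    case (Suc c)
    have "pvas_step (P m) (Some (Suc i), Suc c, w) (Some (Suc i), c, w@[i])"
      using st_down[of "Suc i" m c w] \<open>Suc i \<le> m\<close> by simp
    moreover have "pvas_reach (P m) (Some (Suc i), c, w@[i]) (None, ack (Suc i) c, w@[i])"
      by (rule Suc.IH)
    moreover note IHi[of "ack (Suc i) c" w]
    ultimately show ?case unfolding pvas_reach_def
      by (simp only: ack_SS) (meson converse_rtranclp_into_rtranclp rtranclp_trans)?
  qed
qed

theorem mainTheorem4:
  fixes m n j :: nat
  assumes "j \<le> m"
  shows "(\<exists>C. pvas_reach (P m) (None, n, [j]) (None, C, []) \<and>
              (\<forall>c. pvas_reach (P m) (None, n, [j]) (None, c, []) \<longrightarrow> c \<le> C))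
       \<and> ack j n = Max {c. pvas_reach (P m) (None, n, [j]) (None, c, [])}"
proof -
  have r: "pvas_reach (P m) (None, n, [j]) (None, ack j n, [])"
  proof -
    have "pvas_step (P m) (None, n, []@[j]) (Some j, n, [])" using assms by (rule st_pop)
    then show ?thesis using reach_state[OF assms, of n "[]"] unfolding pvas_reach_def
      by (simp add: converse_rtranclp_into_rtranclp)
  qed
  have b: "c \<le> ack j n" if "pvas_reach (P m) (None, n, [j]) (None, c, [])" for c
    using pot_reach[OF that] by (simp add: F_def)
  have "Max {c. pvas_reach (P m) (None, n, [j]) (None, c, [])} = ack j n"
  proof (rule Max_eqI)
    show "finite {c. pvas_reach (P m) (None, n, [j]) (None, c, [])}"
      by (rule finite_subset[of _ "{..ack j n}"]) (auto dest: b)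
  qed (use r b in auto)
  then show ?thesis using r b by auto
qed

end
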